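(* Let $G$ be a finite $p$-group, $N$ a normal subgroup, $k=\mathbb F_p$ and $n\ge 0$. Then $$\Lambda^n_N:\frac{\mathcal I(N)kG}{\mathcal I(N)\mathcal I(G)}\to\frac{\mathcal I(N)^{p^n}kG}{\mathcal J^{p^n}(N,G)},\qquad x+\mathcal I(N)\mathcal I(G)\mapsto x^{p^n}+\mathcal J^{p^n}(N,G)$$ is a well defined map.
   Context: $\mathcal I(X)$ is the augmentation ideal of $kX$, viewed inside $kG$. The ideals $\mathcal J^n(N,G)$ of $kG$ are defined by $\mathcal J^1(N,G)=\mathcal I(N)\mathcal I(G)$ and $\mathcal J^{n+1}(N,G)=\mathcal I(N)\mathcal J^n(N,G)+\mathcal J^n(N,G)\mathcal I(N)$; equivalently $\mathcal J^n(N,G)=\mathcal I(N)^n\mathcal I(G)+\sum_{i=1}^{n-1}\mathcal I(N)^{n-i}\mathcal I(G)\mathcal I(N)^i$. *)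

theory Defs
  imports "HOL-Algebra.Algebra" "HOL-Library.Function_Algebras"
begin

text \<open>The group algebra kG of a finite group G over a field k: functions
carrier G -> k (zero outside the carrier), with pointwise addition and
convolution product.\<close>

definition grpalg :: "('g, 'b) monoid_scheme \<Rightarrow> ('g \<Rightarrow> 'k::field) set" where
  "grpalg G = {f. \<forall>x. x \<notin> carrier G \<longrightarrow> f x = 0}"

definition conv :: "('g, 'b) monoid_scheme \<Rightarrow> ('g \<Rightarrow> 'k::field) \<Rightarrow> ('g \<Rightarrow> 'k) \<Rightarrow> ('g \<Rightarrow> 'k)" where
  "conv G f h = (\<lambda>x. if x \<in> carrier G
      then sum (\<lambda>y. f y * h (inv\<^bsub>G\<^esub> y \<otimes>\<^bsub>G\<^esub> x)) (carrier G) else 0)"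

definition gone :: "('g, 'b) monoid_scheme \<Rightarrow> ('g \<Rightarrow> 'k::field)" where
  "gone G = (\<lambda>x. if x = \<one>\<^bsub>G\<^esub> then 1 else 0)"

primrec gapow :: "('g, 'b) monoid_scheme \<Rightarrow> ('g \<Rightarrow> 'k::field) \<Rightarrow> nat \<Rightarrow> ('g \<Rightarrow> 'k)" where
  "gapow G f 0 = gone G"
| "gapow G f (Suc m) = conv G f (gapow G f m)"

inductive_set kspan :: "('g \<Rightarrow> 'k::field) set \<Rightarrow> ('g \<Rightarrow> 'k) set" for S where
  zero: "0 \<in> kspan S"
| base: "s \<in> S \<Longrightarrow> s \<in> kspan S"
| add: "a \<in> kspan S \<Longrightarrow> b \<in> kspan S \<Longrightarrow> a + b \<in> kspan S"
| smult: "a \<in> kspan S \<Longrightarrow> (\<lambda>x. c * a x) \<in> kspan S"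

definition setmul :: "('g, 'b) monoid_scheme \<Rightarrow> ('g \<Rightarrow> 'k::field) set \<Rightarrow> ('g \<Rightarrow> 'k) set \<Rightarrow> ('g \<Rightarrow> 'k) set" where
  "setmul G A B = kspan {conv G a b | a b. a \<in> A \<and> b \<in> B}"

definition setadd :: "('g \<Rightarrow> 'k::field) set \<Rightarrow> ('g \<Rightarrow> 'k) set \<Rightarrow> ('g \<Rightarrow> 'k) set" where
  "setadd A B = {a + b | a b. a \<in> A \<and> b \<in> B}"

text \<open>Augmentation ideal I(X) of kX, viewed inside kG.\<close>
definition augI :: "('g \<Rightarrow> 'k::field) itself \<Rightarrow> 'g set \<Rightarrow> ('g \<Rightarrow> 'k) set" where
  "augI t S = {f. (\<forall>x. x \<notin> S \<longrightarrow> f x = 0) \<and> sum f S = 0}"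

text \<open>Powers A^m for m >= 1 (A^0 is taken to be kG; it is never used below).\<close>
fun setpow :: "('g, 'b) monoid_scheme \<Rightarrow> ('g \<Rightarrow> 'k::field) set \<Rightarrow> nat \<Rightarrow> ('g \<Rightarrow> 'k) set" where
  "setpow G A 0 = grpalg G"
| "setpow G A (Suc 0) = A"
| "setpow G A (Suc (Suc m)) = setmul G A (setpow G A (Suc m))"

text \<open>J^m(N,G) for m >= 1: J^1 = I(N)I(G), J^(m+1) = I(N)J^m + J^m I(N).
  (J^0 is set to kG; never used.)\<close>
fun Jideal :: "('g, 'b) monoid_scheme \<Rightarrow> 'g set \<Rightarrow> ('g \<Rightarrow> 'k::field) itself \<Rightarrow> nat \<Rightarrow> ('g \<Rightarrow> 'k) set" where
  "Jideal G N t 0 = grpalg G"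
| "Jideal G N t (Suc 0) = setmul G (augI t N) (augI t (carrier G))"
| "Jideal G N t (Suc (Suc m)) =
     setadd (setmul G (augI t N) (Jideal G N t (Suc m)))
            (setmul G (Jideal G N t (Suc m)) (augI t N))"

end

theory Submission
  imports Defs
begin


definition subsp :: "('g \<Rightarrow> 'k::field) set \<Rightarrow> bool" where
 "subsp V \<longleftrightarrow> 0 \<in> V \<and> (\<forall>a\<in>V. \<forall>b\<in>V. a + b \<in> V) \<and> (\<forall>a\<in>V. \<forall>c. (\<lambda>x. c * a x) \<in> V)"

definition lin :: "(('g \<Rightarrow> 'k::field) \<Rightarrow> ('g \<Rightarrow> 'k)) \<Rightarrow> bool" where
 "lin L \<longleftrightarrow> L 0 = 0 \<and> (\<forall>a b. L (a + b) = L a + L b) \<and> (\<forall>c a. L (\<lambda>x. c * a x) = (\<lambda>x. c * L a x))"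

lemma subsp_kspan: "subsp (kspan S)"
  unfolding subsp_def by (auto intro: kspan.intros)

lemma subsp_setmul: "subsp (setmul G A B)"
  unfolding setmul_def by (rule subsp_kspan)

lemma kspan_least: assumes "subsp V" "S \<subseteq> V" shows "kspan S \<subseteq> V"
proof
  fix x assume "x \<in> kspan S" then show "x \<in> V"
    by induct (use assms in \<open>unfold subsp_def, blast+\<close>)
qed

lemma subsp_add: "subsp V \<Longrightarrow> a \<in> V \<Longrightarrow> b \<in> V \<Longrightarrow> a + b \<in> V"
  unfolding subsp_def by blast

lemma subsp_smult: "subsp V \<Longrightarrow> a \<in> V \<Longrightarrow> (\<lambda>x. c * a x) \<in> V"
  unfolding subsp_def by blast

lemma subsp_diff: assumes V: "subsp V" "a\<in>V" "b\<in>V" shows "a - b \<in> V"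
proof -
  have "(\<lambda>x. (-1) * b x) \<in> V" using V unfolding subsp_def by blast
  hence "a + (\<lambda>x. (-1) * b x) \<in> V" using V unfolding subsp_def by blast
  moreover have "a + (\<lambda>x. (-1) * b x) = a - b" by (rule ext) simp
  ultimately show ?thesis by simp
qed

lemma span_lin:
  assumes "x \<in> kspan S" "subsp V" "lin L" "\<And>s. s \<in> S \<Longrightarrow> L s \<in> V"
  shows "L x \<in> V"
  using assms(1)
proof induct
  case zero show ?case using assms(2,3) unfolding subsp_def lin_def by metis
next
  case (base s) show ?case using assms(4) base .
next
  case (add a b) then show ?case using assms(2,3) unfolding subsp_def lin_def by metis
next
  case (smult a c) then show ?case using assms(2,3) unfolding subsp_def lin_def by metis
qed

lemma setmul_lin:
  assumes "x \<in> setmul G A B" "subsp V" "lin L" "\<And>a b. a \<in> A \<Longrightarrow> b \<in> B \<Longrightarrow> L (conv G a b) \<in> V"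
  shows "L x \<in> V"
  using assms(1) unfolding setmul_def
  by (rule span_lin[OF _ assms(2,3)]) (use assms(4) in blast)

lemma setmul_base: "a \<in> A \<Longrightarrow> b \<in> B \<Longrightarrow> conv G a b \<in> setmul G A B"
  unfolding setmul_def by (rule kspan.base) blast

lemma conv_add_left: "conv G (a + b) c = conv G a c + conv G b c"
  by (rule ext) (simp add: conv_def distrib_right sum.distrib)
lemma conv_add_right: "conv G a (b + c) = conv G a b + conv G a c"
  by (rule ext) (simp add: conv_def distrib_left sum.distrib)
lemma conv_diff_left: "conv G (a - b) c = conv G a c - conv G b c"
  by (rule ext) (simp add: conv_def left_diff_distrib sum_subtractf)
lemma conv_diff_right: "conv G a (b - c) = conv G a b - conv G a c"
  by (rule ext) (simp add: conv_def right_diff_distrib sum_subtractf)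
lemma conv_smult_left: "conv G (\<lambda>x. c * a x) b = (\<lambda>x. c * conv G a b x)"
  by (rule ext) (simp add: conv_def sum_distrib_left mult.assoc)
lemma conv_smult_right: "conv G a (\<lambda>x. c * b x) = (\<lambda>x. c * conv G a b x)"
  by (rule ext) (simp add: conv_def sum_distrib_left mult.left_commute)
lemma conv_zero_left: "conv G 0 b = 0"
  by (rule ext) (simp add: conv_def)
lemma conv_zero_right: "conv G a 0 = 0"
  by (rule ext) (simp add: conv_def)

lemma lin_left: "lin (\<lambda>x. conv G x y)"
  by (simp add: lin_def conv_add_left conv_smult_left conv_zero_left)
lemma lin_right: "lin (\<lambda>y. conv G x y)"
  by (simp add: lin_def conv_add_right conv_smult_right conv_zero_right)
lemma lin_id: "lin (\<lambda>x. x)"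
  by (simp add: lin_def)
lemma lin_comp: "lin L \<Longrightarrow> lin M \<Longrightarrow> lin (\<lambda>x. L (M x))"
  by (simp add: lin_def)

lemma (in group) conv_assoc:
  "conv G (conv G a b) c = conv G a (conv G b c)"
proof (rule ext)
  fix x
  show "conv G (conv G a b) c x = conv G a (conv G b c) x"
  proof (cases "x \<in> carrier G")
    case False then show ?thesis by (simp add: conv_def)
  next
    case True
    have "conv G (conv G a b) c x = (\<Sum>y\<in>carrier G. (\<Sum>z\<in>carrier G. a z * b (inv z \<otimes> y)) * c (inv y \<otimes> x))"
      using True by (simp add: conv_def)
    also have "\<dots> = (\<Sum>y\<in>carrier G. \<Sum>z\<in>carrier G. a z * b (inv z \<otimes> y) * c (inv y \<otimes> x))"
      by (simp add: sum_distrib_right)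
    also have "\<dots> = (\<Sum>z\<in>carrier G. \<Sum>y\<in>carrier G. a z * b (inv z \<otimes> y) * c (inv y \<otimes> x))"
      by (rule sum.swap)
    also have "\<dots> = (\<Sum>z\<in>carrier G. \<Sum>w\<in>carrier G. a z * b w * c (inv w \<otimes> (inv z \<otimes> x)))"
    proof (rule sum.cong[OF refl])
      fix z assume z: "z \<in> carrier G"
      have hz: "\<And>u. u \<in> carrier G \<Longrightarrow> u \<otimes> z \<otimes> inv z \<otimes> x = u \<otimes> x"
        using z by (metis m_closed r_inv r_one inv_closed m_assoc)
      show "(\<Sum>y\<in>carrier G. a z * b (inv z \<otimes> y) * c (inv y \<otimes> x)) = (\<Sum>w\<in>carrier G. a z * b w * c (inv w \<otimes> (inv z \<otimes> x)))"
        by (rule sum.reindex_bij_witness[of _ "\<lambda>w. z \<otimes> w" "\<lambda>y. inv z \<otimes> y"])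
           (use z True in \<open>auto simp: m_assoc[symmetric] inv_mult_group hz\<close>)
    qed
    also have "\<dots> = conv G a (conv G b c) x"
      using True by (simp add: conv_def sum_distrib_left mult.assoc)
    finally show ?thesis .
  qed
qed


definition dl :: "'g \<Rightarrow> 'g \<Rightarrow> 'k::field" where "dl s = (\<lambda>x. if x = s then 1 else 0)"

lemma conv_in_grpalg: "conv G a b \<in> grpalg G"
  by (simp add: grpalg_def conv_def)

lemma subsp_grpalg: "subsp (grpalg G)"
  unfolding subsp_def grpalg_def by auto

lemma subsp_augI: "subsp (augI t A)"
  unfolding subsp_def augI_def by (auto simp: sum.distrib sum_distrib_left[symmetric])

lemma setmul_sub_grpalg: "x \<in> setmul G A B \<Longrightarrow> x \<in> grpalg G"
proof -
  assume x: "x \<in> setmul G A B"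
  have "{conv G a b |a b. a \<in> A \<and> b \<in> B} \<subseteq> grpalg G" using conv_in_grpalg by blast
  then show ?thesis using kspan_least[OF subsp_grpalg] x unfolding setmul_def by blast
qed

lemma restr_span: "finite A \<Longrightarrow> A \<subseteq> B \<Longrightarrow> (\<lambda>x. if x \<in> A then f x else 0) \<in> kspan {dl s | s. s \<in> B}"
proof (induction A rule: finite_induct)
  case empty
  have "(\<lambda>x. if x \<in> {} then f x else 0) = 0" by (rule ext) simp
  then show ?case by (simp add: kspan.zero)
next
  case (insert s A)
  have e: "(\<lambda>x. if x \<in> insert s A then f x else 0) = (\<lambda>x. if x \<in> A then f x else 0) + (\<lambda>x. f s * dl s x)"
    using insert(2) by (auto simp: dl_def)
  have "dl s \<in> kspan {dl s | s. s \<in> B}" using insert(4) by (auto intro: kspan.base)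
  then have "(\<lambda>x. f s * dl s x) \<in> kspan {dl s | s. s \<in> B}" by (rule kspan.smult)
  then show ?case unfolding e using insert by (auto intro: kspan.add)
qed

lemma aug_span: "finite A \<Longrightarrow> A \<subseteq> B \<Longrightarrow>
  (\<lambda>x. if x \<in> A then f x else 0) - (\<lambda>x. (\<Sum>y\<in>A. f y) * dl e x) \<in> kspan {dl s - dl e | s. s \<in> B}"
proof (induction A rule: finite_induct)
  case empty
  have z: "(\<lambda>x. if x \<in> {} then f x else 0) - (\<lambda>x. (\<Sum>y\<in>{}. f y) * dl e x) = 0" by (rule ext) simp
  show ?case unfolding z by (rule kspan.zero)
next
  case (insert s A)
  have e: "(\<lambda>x. if x \<in> insert s A then f x else 0) - (\<lambda>x. (\<Sum>y\<in>insert s A. f y) * dl e x) =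
     ((\<lambda>x. if x \<in> A then f x else 0) - (\<lambda>x. (\<Sum>y\<in>A. f y) * dl e x)) + (\<lambda>x. f s * (dl s - dl e) x)"
    using insert(1,2) by (auto simp: dl_def algebra_simps)
  have "dl s - dl e \<in> kspan {dl s - dl e | s. s \<in> B}" using insert(4) by (auto intro: kspan.base)
  then have "(\<lambda>x. f s * (dl s - dl e) x) \<in> kspan {dl s - dl e | s. s \<in> B}" by (rule kspan.smult)
  moreover have "A \<subseteq> B" using insert.prems by blast
  ultimately show ?case unfolding e by (intro kspan.add insert.IH)
qed

lemma grpalg_span: "finite (carrier G) \<Longrightarrow> f \<in> grpalg G \<Longrightarrow> f \<in> kspan {dl s | s. s \<in> carrier G}"
proof -
  assume "finite (carrier G)" "f \<in> grpalg G"
  moreover have "f = (\<lambda>x. if x \<in> carrier G then f x else 0)" using \<open>f \<in> grpalg G\<close>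
    by (auto simp: grpalg_def)
  ultimately show ?thesis using restr_span[of "carrier G" "carrier G" f] by simp
qed

lemma augI_span: "finite A \<Longrightarrow> f \<in> augI t A \<Longrightarrow> f \<in> kspan {dl s - dl e | s. s \<in> A}"
proof -
  assume "finite A" "f \<in> augI t A"
  moreover have "f = (\<lambda>x. if x \<in> A then f x else 0) - (\<lambda>x. (\<Sum>y\<in>A. f y) * dl e x)" using \<open>f \<in> augI t A\<close>
    by (auto simp: augI_def)
  ultimately show ?thesis using aug_span[of A A f e] by simp
qed

lemma dl_aug: "finite A \<Longrightarrow> m \<in> A \<Longrightarrow> e \<in> A \<Longrightarrow> dl m - dl e \<in> augI t A"
  by (simp add: augI_def dl_def sum_subtractf)

lemma subsp_setadd: assumes "subsp A" "subsp B" shows "subsp (setadd A B)"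
proof -
  have "0 \<in> A" "0 \<in> B" using assms unfolding subsp_def by blast+
  moreover have "(0::'a \<Rightarrow> 'b) = 0 + 0" by simp
  ultimately have "0 \<in> setadd A B" unfolding setadd_def by blast
  moreover have "\<forall>a\<in>setadd A B. \<forall>b\<in>setadd A B. a + b \<in> setadd A B"
  proof (intro ballI)
    fix x y assume "x \<in> setadd A B" "y \<in> setadd A B"
    then obtain a1 b1 a2 b2 where ab: "x = a1 + b1" "y = a2 + b2" "a1 \<in> A" "a2 \<in> A" "b1 \<in> B" "b2 \<in> B"
      unfolding setadd_def by blast
    have eq: "x + y = (a1 + a2) + (b1 + b2)" unfolding ab(1,2) by (simp add: algebra_simps)
    have "a1 + a2 \<in> A" using assms(1) ab(3,4) by (rule subsp_add)
    moreover have "b1 + b2 \<in> B" using assms(2) ab(5,6) by (rule subsp_add)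
    ultimately have "(a1 + a2) + (b1 + b2) \<in> setadd A B" unfolding setadd_def by blast
    then show "x + y \<in> setadd A B" unfolding eq .
  qed
  moreover have "\<forall>a\<in>setadd A B. \<forall>c. (\<lambda>x. c * a x) \<in> setadd A B"
  proof (intro ballI allI)
    fix x c assume "x \<in> setadd A B"
    then obtain a1 b1 where ab: "x = a1 + b1" "a1 \<in> A" "b1 \<in> B"
      unfolding setadd_def by blast
    have eq: "(\<lambda>y. c * x y) = (\<lambda>y. c * a1 y) + (\<lambda>y. c * b1 y)"
      unfolding ab(1) by (rule ext) (simp add: algebra_simps)
    have "(\<lambda>y. c * a1 y) \<in> A" using assms(1) ab(2) by (rule subsp_smult)
    moreover have "(\<lambda>y. c * b1 y) \<in> B" using assms(2) ab(3) by (rule subsp_smult)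
    ultimately have "(\<lambda>y. c * a1 y) + (\<lambda>y. c * b1 y) \<in> setadd A B" unfolding setadd_def by blast
    then show "(\<lambda>y. c * x y) \<in> setadd A B" unfolding eq .
  qed
  ultimately show ?thesis unfolding subsp_def by blast
qed

lemma setadd_l: "a \<in> A \<Longrightarrow> 0 \<in> B \<Longrightarrow> a \<in> setadd A B"
  unfolding setadd_def by (rule CollectI, rule exI[of _ a], rule exI[of _ 0]) simp
lemma setadd_r: "b \<in> B \<Longrightarrow> 0 \<in> A \<Longrightarrow> b \<in> setadd A B"
  unfolding setadd_def by (rule CollectI, rule exI[of _ 0], rule exI[of _ b]) simp
lemma setadd_in: "a \<in> A \<Longrightarrow> b \<in> B \<Longrightarrow> a + b \<in> setadd A B"
  unfolding setadd_def by blast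

lemma J_subsp: "subsp (Jideal G N t (Suc k))"
  by (cases k) (auto simp: subsp_setmul subsp_setadd)

lemma J_IN: "j \<in> Jideal G N t (Suc k) \<Longrightarrow> a \<in> augI t N \<Longrightarrow>
   conv G j a \<in> Jideal G N t (Suc (Suc k)) \<and> conv G a j \<in> Jideal G N t (Suc (Suc k))"
  by (auto simp: setmul_base setadd_l setadd_r subsp_setmul[unfolded subsp_def])

locale fgroup = group + assumes fin: "finite (carrier G)"

context fgroup begin

lemma inv_mult_eq: "s \<in> carrier G \<Longrightarrow> x \<in> carrier G \<Longrightarrow> u \<in> carrier G \<Longrightarrow> (inv s \<otimes> x = u) = (x = s \<otimes> u)"
  by (metis inv_solve_left)

lemma conv_dl_left: assumes "s \<in> carrier G" "x \<in> carrier G"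
  shows "conv G (dl s) h x = h (inv s \<otimes> x)"
proof -
  have "conv G (dl s) h x = (\<Sum>y\<in>carrier G. if y = s then h (inv s \<otimes> x) else 0)"
    unfolding conv_def dl_def using assms by (auto intro!: sum.cong)
  then show ?thesis using assms fin by simp
qed

lemma conv_dl: "s \<in> carrier G \<Longrightarrow> u \<in> carrier G \<Longrightarrow> conv G (dl s) (dl u) = dl (s \<otimes> u)"
proof (rule ext)
  fix x assume su: "s \<in> carrier G" "u \<in> carrier G"
  show "conv G (dl s) (dl u) x = dl (s \<otimes> u) x"
  proof (cases "x \<in> carrier G")
    case True then show ?thesis using su by (simp add: conv_dl_left) (simp add: dl_def inv_mult_eq)
  qed (use su in \<open>auto simp: conv_def dl_def\<close>)
qed

lemma conv_gone: "f \<in> grpalg G \<Longrightarrow> conv G f (gone G) = f"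
proof (rule ext)
  fix x assume f: "f \<in> grpalg G"
  show "conv G f (gone G) x = f x"
  proof (cases "x \<in> carrier G")
    case True
    have "conv G f (gone G) x = (\<Sum>y\<in>carrier G. if y = x then f x else 0)"
      unfolding conv_def gone_def using True
      by (auto intro!: sum.cong simp: inv_mult_eq)
    then show ?thesis using True fin by simp
  qed (use f in \<open>auto simp: conv_def grpalg_def\<close>)
qed

lemma conv_span2:
  assumes "x \<in> kspan S" "y \<in> kspan T" "subsp V" "\<And>s u. s \<in> S \<Longrightarrow> u \<in> T \<Longrightarrow> conv G s u \<in> V"
  shows "conv G x y \<in> V"
proof (rule span_lin[OF assms(1,3) lin_left])
  fix s assume s: "s \<in> S"
  show "conv G s y \<in> V"
    by (rule span_lin[OF assms(2,3) lin_right]) (use assms(4) s in blast)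
qed

lemma finN: "N \<lhd> G \<Longrightarrow> finite N"
  using fin normal_imp_subgroup subgroup.subset finite_subset by metis

lemma norm1:
  fixes t :: "('a \<Rightarrow> 'k::field) itself"
  assumes N: "N \<lhd> G" and g: "g \<in> grpalg G" and a: "a \<in> augI t N"
  shows "conv G g a \<in> setmul G (augI t N) (grpalg G)"
proof (rule conv_span2[OF grpalg_span[OF fin g] augI_span[OF finN[OF N] a, of \<one>] subsp_setmul])
  fix s u :: "'a \<Rightarrow> 'k" assume s: "s \<in> {dl s |s. s \<in> carrier G}" and u: "u \<in> {dl s - dl \<one> |s. s \<in> N}"
  from s obtain s0 where s0: "s = dl s0" "s0 \<in> carrier G" by blast
  from u obtain m where m: "u = dl m - dl \<one>" "m \<in> N" by blast
  have sub: "subgroup N G" using N normal_imp_subgroup by blast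
  have mc: "m \<in> carrier G" using m sub subgroup.subset by blast
  have n1: "\<one> \<in> N" using sub subgroup.one_closed by blast
  have c: "s0 \<otimes> m \<otimes> inv s0 \<in> N" by (rule normal.inv_op_closed2[OF N s0(2) m(2)])
  have cc: "s0 \<otimes> m \<otimes> inv s0 \<in> carrier G" using s0 mc by simp
  have eq: "conv G s u = conv G (dl (s0 \<otimes> m \<otimes> inv s0) - dl \<one>) (dl s0)"
    unfolding s0 m conv_diff_left conv_diff_right
    using s0 mc cc by (simp add: conv_dl m_assoc)
  have A: "dl (s0 \<otimes> m \<otimes> inv s0) - dl \<one> \<in> augI t N"
    by (rule dl_aug[OF finN[OF N] c n1])
  have B: "dl s0 \<in> grpalg G" using s0 by (auto simp: grpalg_def dl_def)
  show "conv G s u \<in> setmul G (augI t N) (grpalg G)" unfolding eq by (rule setmul_base[OF A B])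
qed

lemma norm2:
  fixes t :: "('a \<Rightarrow> 'k::field) itself"
  assumes N: "N \<lhd> G" and g: "g \<in> grpalg G" and a: "a \<in> augI t N"
  shows "conv G a g \<in> setmul G (grpalg G) (augI t N)"
proof (rule conv_span2[OF augI_span[OF finN[OF N] a, of \<one>] grpalg_span[OF fin g] subsp_setmul])
  fix s u :: "'a \<Rightarrow> 'k" assume u: "u \<in> {dl s |s. s \<in> carrier G}" and s: "s \<in> {dl s - dl \<one> |s. s \<in> N}"
  from u obtain s0 where s0: "u = dl s0" "s0 \<in> carrier G" by blast
  from s obtain m where m: "s = dl m - dl \<one>" "m \<in> N" by blast
  have sub: "subgroup N G" using N normal_imp_subgroup by blast
  have mc: "m \<in> carrier G" using m sub subgroup.subset by blast
  have n1: "\<one> \<in> N" using sub subgroup.one_closed by blast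
  have c: "inv s0 \<otimes> m \<otimes> s0 \<in> N" by (rule normal.inv_op_closed1[OF N s0(2) m(2)])
  have cc: "inv s0 \<otimes> m \<otimes> s0 \<in> carrier G" using s0 mc by simp
  have eq: "conv G s u = conv G (dl s0) (dl (inv s0 \<otimes> m \<otimes> s0) - dl \<one>)"
    unfolding s0 m conv_diff_left conv_diff_right
    using s0 mc cc by (simp add: conv_dl m_assoc[symmetric])
  have A: "dl (inv s0 \<otimes> m \<otimes> s0) - dl \<one> \<in> augI t N"
    by (rule dl_aug[OF finN[OF N] c n1])
  have B: "dl s0 \<in> grpalg G" using s0 by (auto simp: grpalg_def dl_def)
  show "conv G s u \<in> setmul G (grpalg G) (augI t N)" unfolding eq by (rule setmul_base[OF B A])
qed

lemma IG_left:
  fixes t :: "('a \<Rightarrow> 'k::field) itself"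
  assumes g: "g \<in> grpalg G" and b: "b \<in> augI t (carrier G)"
  shows "conv G g b \<in> augI t (carrier G)"
proof (rule conv_span2[OF grpalg_span[OF fin g] augI_span[OF fin b, of \<one>] subsp_augI])
  fix s u :: "'a \<Rightarrow> 'k" assume s: "s \<in> {dl s |s. s \<in> carrier G}" and u: "u \<in> {dl s - dl \<one> |s. s \<in> carrier G}"
  from s obtain s0 where s0: "s = dl s0" "s0 \<in> carrier G" by blast
  from u obtain m where m: "u = dl m - dl \<one>" "m \<in> carrier G" by blast
  have "conv G s u = dl (s0 \<otimes> m) - dl s0"
    unfolding s0 m conv_diff_right using s0 m by (simp add: conv_dl)
  then show "conv G s u \<in> augI t (carrier G)" using s0 m fin by (simp add: dl_aug)
qed

lemma IG_right:
  fixes t :: "('a \<Rightarrow> 'k::field) itself"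
  assumes g: "g \<in> grpalg G" and b: "b \<in> augI t (carrier G)"
  shows "conv G b g \<in> augI t (carrier G)"
proof (rule conv_span2[OF augI_span[OF fin b, of \<one>] grpalg_span[OF fin g] subsp_augI])
  fix s u :: "'a \<Rightarrow> 'k" assume u: "u \<in> {dl s |s. s \<in> carrier G}" and s: "s \<in> {dl s - dl \<one> |s. s \<in> carrier G}"
  from u obtain s0 where s0: "u = dl s0" "s0 \<in> carrier G" by blast
  from s obtain m where m: "s = dl m - dl \<one>" "m \<in> carrier G" by blast
  have "conv G s u = dl (m \<otimes> s0) - dl s0"
    unfolding s0 m conv_diff_left using s0 m by (simp add: conv_dl)
  then show "conv G s u \<in> augI t (carrier G)" using s0 m fin by (simp add: dl_aug)
qed

lemma J_ideal:
  fixes t :: "('a \<Rightarrow> 'k::field) itself"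
  assumes N: "N \<lhd> G"
  shows "\<forall>g\<in>grpalg G. \<forall>j\<in>Jideal G N t (Suc k). conv G g j \<in> Jideal G N t (Suc k) \<and> conv G j g \<in> Jideal G N t (Suc k)"
proof (induction k)
  case 0
  show ?case
  proof (intro ballI conjI)
    fix g j :: "'a \<Rightarrow> 'k" assume g: "g \<in> grpalg G" and j: "j \<in> Jideal G N t (Suc 0)"
    have j': "j \<in> setmul G (augI t N) (augI t (carrier G))" using j by simp
    show "conv G g j \<in> Jideal G N t (Suc 0)" unfolding Jideal.simps
    proof (rule setmul_lin[where L="\<lambda>j. conv G g j", OF j' subsp_setmul lin_right])
      fix a b :: "'a \<Rightarrow> 'k" assume a: "a \<in> augI t N" and b: "b \<in> augI t (carrier G)"
      have "conv G g (conv G a b) = conv G (conv G g a) b" by (simp add: conv_assoc)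
      moreover have "conv G (conv G g a) b \<in> setmul G (augI t N) (augI t (carrier G))"
      proof (rule setmul_lin[where L="\<lambda>x. conv G x b", OF norm1[OF N g a] subsp_setmul lin_left])
        fix a' h :: "'a \<Rightarrow> 'k" assume a': "a' \<in> augI t N" and h: "h \<in> grpalg G"
        show "conv G (conv G a' h) b \<in> setmul G (augI t N) (augI t (carrier G))"
          using IG_left[OF h b] a' by (simp add: conv_assoc setmul_base)
      qed
      ultimately show "conv G g (conv G a b) \<in> setmul G (augI t N) (augI t (carrier G))" by simp
    qed
    show "conv G j g \<in> Jideal G N t (Suc 0)" unfolding Jideal.simps
    proof (rule setmul_lin[where L="\<lambda>j. conv G j g", OF j' subsp_setmul lin_left])
      fix a b :: "'a \<Rightarrow> 'k" assume a: "a \<in> augI t N" and b: "b \<in> augI t (carrier G)"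
      show "conv G (conv G a b) g \<in> setmul G (augI t N) (augI t (carrier G))"
        using IG_right[OF g b] a by (simp add: conv_assoc setmul_base)
    qed
  qed
next
  case (Suc k)
  let ?J = "Jideal G N t (Suc k)"
  let ?IN = "augI t N"
  have IHl: "\<And>g j. g \<in> grpalg G \<Longrightarrow> j \<in> ?J \<Longrightarrow> conv G g j \<in> ?J" using Suc by blast
  have IHr: "\<And>g j. g \<in> grpalg G \<Longrightarrow> j \<in> ?J \<Longrightarrow> conv G j g \<in> ?J" using Suc by blast
  show ?case
  proof (intro ballI conjI)
    fix g j :: "'a \<Rightarrow> 'k" assume g: "g \<in> grpalg G" and j: "j \<in> Jideal G N t (Suc (Suc k))"
    then obtain u v where uv: "j = u + v" "u \<in> setmul G ?IN ?J" "v \<in> setmul G ?J ?IN"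
      by (auto simp: setadd_def)
    have "conv G g u \<in> setmul G ?IN ?J"
    proof (rule setmul_lin[where L="\<lambda>j. conv G g j", OF uv(2) subsp_setmul lin_right])
      fix a j0 :: "'a \<Rightarrow> 'k" assume a: "a \<in> ?IN" and j0: "j0 \<in> ?J"
      have "conv G g (conv G a j0) = conv G (conv G g a) j0" by (simp add: conv_assoc)
      moreover have "conv G (conv G g a) j0 \<in> setmul G ?IN ?J"
      proof (rule setmul_lin[where L="\<lambda>x. conv G x j0", OF norm1[OF N g a] subsp_setmul lin_left])
        fix a' h :: "'a \<Rightarrow> 'k" assume a': "a' \<in> ?IN" and h: "h \<in> grpalg G"
        show "conv G (conv G a' h) j0 \<in> setmul G ?IN ?J"
          using IHl[OF h j0] a' by (simp add: conv_assoc setmul_base)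
      qed
      ultimately show "conv G g (conv G a j0) \<in> setmul G ?IN ?J" by simp
    qed
    moreover have "conv G g v \<in> setmul G ?J ?IN"
    proof (rule setmul_lin[where L="\<lambda>j. conv G g j", OF uv(3) subsp_setmul lin_right])
      fix j0 a :: "'a \<Rightarrow> 'k" assume j0: "j0 \<in> ?J" and a: "a \<in> ?IN"
      show "conv G g (conv G j0 a) \<in> setmul G ?J ?IN"
        using IHl[OF g j0] a by (simp add: conv_assoc[symmetric] setmul_base)
    qed
    ultimately show "conv G g j \<in> Jideal G N t (Suc (Suc k))"
      using uv(1) by (simp add: conv_add_right setadd_in)
    have "conv G u g \<in> setmul G ?IN ?J"
    proof (rule setmul_lin[where L="\<lambda>j. conv G j g", OF uv(2) subsp_setmul lin_left])
      fix a j0 :: "'a \<Rightarrow> 'k" assume a: "a \<in> ?IN" and j0: "j0 \<in> ?J"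
      show "conv G (conv G a j0) g \<in> setmul G ?IN ?J"
        using IHr[OF g j0] a by (simp add: conv_assoc setmul_base)
    qed
    moreover have "conv G v g \<in> setmul G ?J ?IN"
    proof (rule setmul_lin[where L="\<lambda>j. conv G j g", OF uv(3) subsp_setmul lin_left])
      fix j0 a :: "'a \<Rightarrow> 'k" assume j0: "j0 \<in> ?J" and a: "a \<in> ?IN"
      have "conv G (conv G j0 a) g = conv G j0 (conv G a g)" by (simp add: conv_assoc)
      moreover have "conv G j0 (conv G a g) \<in> setmul G ?J ?IN"
      proof (rule setmul_lin[where L="\<lambda>y. conv G j0 y", OF norm2[OF N g a] subsp_setmul lin_right])
        fix h a' :: "'a \<Rightarrow> 'k" assume h: "h \<in> grpalg G" and a': "a' \<in> ?IN"
        show "conv G j0 (conv G h a') \<in> setmul G ?J ?IN"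
          using IHr[OF h j0] a' by (simp add: conv_assoc[symmetric] setmul_base)
      qed
      ultimately show "conv G (conv G j0 a) g \<in> setmul G ?J ?IN" by simp
    qed
    ultimately show "conv G j g \<in> Jideal G N t (Suc (Suc k))"
      using uv(1) by (simp add: conv_add_left setadd_in)
  qed
qed

lemma R_right:
  fixes y h :: "'a \<Rightarrow> 'k::field"
  assumes y: "y \<in> setmul G A (grpalg G)" shows "conv G y h \<in> setmul G A (grpalg G)"
proof (rule setmul_lin[where L="\<lambda>y. conv G y h", OF y subsp_setmul lin_left])
  fix a b :: "'a \<Rightarrow> 'k" assume a: "a \<in> A" and b: "b \<in> grpalg G"
  show "conv G (conv G a b) h \<in> setmul G A (grpalg G)"
    unfolding conv_assoc by (rule setmul_base[OF a conv_in_grpalg])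
qed

lemma L_mul:
  fixes y a :: "'a \<Rightarrow> 'k::field"
  assumes a: "a \<in> A" and y: "y \<in> setmul G B (grpalg G)" shows "conv G a y \<in> setmul G (setmul G A B) (grpalg G)"
proof (rule setmul_lin[where L="\<lambda>y. conv G a y", OF y subsp_setmul lin_right])
  fix b g :: "'a \<Rightarrow> 'k" assume b: "b \<in> B" and g: "g \<in> grpalg G"
  show "conv G a (conv G b g) \<in> setmul G (setmul G A B) (grpalg G)"
    unfolding conv_assoc[symmetric] by (rule setmul_base[OF setmul_base[OF a b] g])
qed

lemma norm_pow:
  fixes t :: "('a \<Rightarrow> 'k::field) itself"
  assumes N: "N \<lhd> G"
  shows "g \<in> grpalg G \<Longrightarrow> v \<in> setpow G (augI t N) (Suc k) \<Longrightarrow> conv G g v \<in> setmul G (setpow G (augI t N) (Suc k)) (grpalg G)"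
proof (induction k arbitrary: g v)
  case 0 then show ?case using norm1[OF N] by simp
next
  case (Suc k)
  let ?P = "setpow G (augI t N) (Suc k)"
  have v: "v \<in> setmul G (augI t N) ?P" using Suc.prems by simp
  show ?case unfolding setpow.simps
  proof (rule setmul_lin[where L="\<lambda>v. conv G g v", OF v subsp_setmul lin_right])
    fix a w :: "'a \<Rightarrow> 'k" assume a: "a \<in> augI t N" and w: "w \<in> ?P"
    have "conv G g (conv G a w) = conv G (conv G g a) w" by (simp add: conv_assoc)
    moreover have "conv G (conv G g a) w \<in> setmul G (setmul G (augI t N) ?P) (grpalg G)"
    proof (rule setmul_lin[where L="\<lambda>x. conv G x w", OF norm1[OF N Suc.prems(1) a] subsp_setmul lin_left])
      fix a' h :: "'a \<Rightarrow> 'k" assume a': "a' \<in> augI t N" and h: "h \<in> grpalg G"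
      show "conv G (conv G a' h) w \<in> setmul G (setmul G (augI t N) ?P) (grpalg G)"
        using L_mul[OF a' Suc.IH[OF h w]] by (simp add: conv_assoc)
    qed
    ultimately show "conv G g (conv G a w) \<in> setmul G (setmul G (augI t N) ?P) (grpalg G)" by simp
  qed
qed

lemma claim1:
  fixes t :: "('a \<Rightarrow> 'k::field) itself"
  assumes N: "N \<lhd> G" and x: "x \<in> setmul G (augI t N) (grpalg G)"
  shows "gapow G x (Suc k) \<in> setmul G (setpow G (augI t N) (Suc k)) (grpalg G)"
proof (induction k)
  case 0 then show ?case using x setmul_sub_grpalg[OF x] by (simp add: conv_gone)
next
  case (Suc k)
  let ?P = "setpow G (augI t N) (Suc k)"
  let ?y = "gapow G x (Suc k)"
  show ?case unfolding setpow.simps gapow.simps(2)[of G x "Suc k"]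
  proof (rule setmul_lin[where L="\<lambda>x. conv G x ?y", OF x subsp_setmul lin_left])
    fix a g :: "'a \<Rightarrow> 'k" assume a: "a \<in> augI t N" and g: "g \<in> grpalg G"
    have "conv G g ?y \<in> setmul G ?P (grpalg G)"
    proof (rule setmul_lin[where L="\<lambda>y. conv G g y", OF Suc.IH subsp_setmul lin_right])
      fix p h :: "'a \<Rightarrow> 'k" assume p: "p \<in> ?P" and h: "h \<in> grpalg G"
      show "conv G g (conv G p h) \<in> setmul G ?P (grpalg G)"
        unfolding conv_assoc[symmetric] by (rule R_right[OF norm_pow[OF N g p]])
    qed
    then show "conv G (conv G a g) ?y \<in> setmul G (setmul G (augI t N) ?P) (grpalg G)"
      using L_mul[OF a] by (simp add: conv_assoc)
  qed
qed

lemma JP: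
  fixes t :: "('a \<Rightarrow> 'k::field) itself"
  assumes N: "N \<lhd> G"
  shows "j \<in> Jideal G N t (Suc k0) \<Longrightarrow> Y \<in> setmul G (setpow G (augI t N) (Suc m)) (grpalg G) \<Longrightarrow>
    conv G j Y \<in> Jideal G N t (Suc k0 + Suc m)"
proof (induction m arbitrary: k0 j Y)
  case 0
  have Y: "Y \<in> setmul G (augI t N) (grpalg G)" using 0 by simp
  have eq0: "Suc k0 + Suc 0 = Suc (Suc k0)" by simp
  show ?case unfolding eq0
  proof (rule setmul_lin[where L="\<lambda>Y. conv G j Y", OF Y J_subsp lin_right])
    fix a g :: "'a \<Rightarrow> 'k" assume a: "a \<in> augI t N" and g: "g \<in> grpalg G"
    have "conv G j a \<in> Jideal G N t (Suc (Suc k0))" using J_IN[OF 0(1) a] by blast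
    then have "conv G (conv G j a) g \<in> Jideal G N t (Suc (Suc k0))" using J_ideal[OF N] g by blast
    then show "conv G j (conv G a g) \<in> Jideal G N t (Suc (Suc k0))" unfolding conv_assoc[symmetric] .
  qed
next
  case (Suc m)
  let ?P = "setpow G (augI t N) (Suc m)"
  have Y: "Y \<in> setmul G (setmul G (augI t N) ?P) (grpalg G)" using Suc.prems by simp
  have eq1: "Suc k0 + Suc (Suc m) = Suc (k0 + Suc (Suc m))" by simp
  show ?case unfolding eq1
  proof (rule setmul_lin[where L="\<lambda>Y. conv G j Y", OF Y J_subsp lin_right])
    fix u g :: "'a \<Rightarrow> 'k" assume u: "u \<in> setmul G (augI t N) ?P" and g: "g \<in> grpalg G"
    show "conv G j (conv G u g) \<in> Jideal G N t (Suc (k0 + Suc (Suc m)))"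
    proof (rule setmul_lin[where L="\<lambda>u. conv G j (conv G u g)", OF u J_subsp lin_comp[OF lin_right lin_left]])
      fix a v :: "'a \<Rightarrow> 'k" assume a: "a \<in> augI t N" and v: "v \<in> ?P"
      have ja: "conv G j a \<in> Jideal G N t (Suc (Suc k0))" using J_IN[OF Suc.prems(1) a] by blast
      have "conv G v g \<in> setmul G ?P (grpalg G)" using v g by (rule setmul_base)
      from Suc.IH[OF ja this]
      have "conv G (conv G j a) (conv G v g) \<in> Jideal G N t (Suc (Suc k0) + Suc m)" .
      moreover have "Suc (k0 + Suc (Suc m)) = Suc (Suc k0) + Suc m" by simp
      moreover have "conv G j (conv G (conv G a v) g) = conv G (conv G j a) (conv G v g)"
        by (simp add: conv_assoc)
      ultimately show "conv G j (conv G (conv G a v) g) \<in> Jideal G N t (Suc (k0 + Suc (Suc m)))"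
        by simp
    qed
  qed
qed

lemma claim2:
  fixes t :: "('a \<Rightarrow> 'k::field) itself"
  assumes N: "N \<lhd> G" and x: "x \<in> setmul G (augI t N) (grpalg G)" and y: "y \<in> setmul G (augI t N) (grpalg G)"
    and xy: "x - y \<in> setmul G (augI t N) (augI t (carrier G))"
  shows "gapow G x (Suc k) - gapow G y (Suc k) \<in> Jideal G N t (Suc k)"
proof (induction k)
  case 0
  have "gapow G x (Suc 0) = x" using setmul_sub_grpalg[OF x] by (simp add: conv_gone)
  moreover have "gapow G y (Suc 0) = y" using setmul_sub_grpalg[OF y] by (simp add: conv_gone)
  ultimately show ?case using xy by (simp only: Jideal.simps)
next
  case (Suc k)
  let ?X = "gapow G x (Suc k)" and ?Y = "gapow G y (Suc k)"
  have e: "gapow G x (Suc (Suc k)) - gapow G y (Suc (Suc k)) = conv G x (?X - ?Y) + conv G (x - y) ?Y"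
    by (simp add: conv_diff_left conv_diff_right)
  have 1: "conv G x (?X - ?Y) \<in> Jideal G N t (Suc (Suc k))"
  proof (rule setmul_lin[where L="\<lambda>x. conv G x (?X - ?Y)", OF x J_subsp lin_left])
    fix a g :: "'a \<Rightarrow> 'k" assume a: "a \<in> augI t N" and g: "g \<in> grpalg G"
    have "conv G g (?X - ?Y) \<in> Jideal G N t (Suc k)" using J_ideal[OF N] g Suc.IH by blast
    from J_IN[OF this a] have "conv G a (conv G g (?X - ?Y)) \<in> Jideal G N t (Suc (Suc k))" by blast
    then show "conv G (conv G a g) (?X - ?Y) \<in> Jideal G N t (Suc (Suc k))"
      unfolding conv_assoc .
  qed
  have 2: "conv G (x - y) ?Y \<in> Jideal G N t (Suc (Suc k))"
  proof -
    have xy': "x - y \<in> Jideal G N t (Suc 0)" using xy by (simp only: Jideal.simps)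
    have "Suc 0 + Suc k = Suc (Suc k)" by simp
    with JP[OF N xy' claim1[OF N y, of k]] show ?thesis by simp
  qed
  show ?case unfolding e by (rule subsp_add[OF J_subsp 1 2])
qed
end


theorem mainTheorem7:
  fixes G :: "'g monoid" and N :: "'g set" and p :: nat and n :: nat
    and t :: "('g \<Rightarrow> 'k::field) itself"
  assumes "group G" and "finite (carrier G)" and "Factorial_Ring.prime p"
    and "\<exists>a. card (carrier G) = p ^ a"
    and "N \<lhd> G"
    and "card (UNIV :: 'k set) = p"
  shows "(\<forall>x\<in>setmul G (augI t N) (grpalg G).
           gapow G x (p ^ n) \<in> setmul G (setpow G (augI t N) (p ^ n)) (grpalg G)) \<and>
         (\<forall>x\<in>setmul G (augI t N) (grpalg G). \<forall>y\<in>setmul G (augI t N) (grpalg G).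
           x - y \<in> setmul G (augI t N) (augI t (carrier G)) \<longrightarrow>
           gapow G x (p ^ n) - gapow G y (p ^ n) \<in> Jideal G N t (p ^ n))"
  proof -
  interpret fgroup G using assms(1,2) by (simp add: fgroup_def fgroup_axioms_def)
  have p0: "p > 0" using assms(3) prime_gt_0_nat by blast
  then have e: "p ^ n = Suc (p ^ n - 1)" by simp
  show ?thesis
  proof (intro conjI ballI impI)
    fix x assume x: "x \<in> setmul G (augI t N) (grpalg G)"
    show "gapow G x (p ^ n) \<in> setmul G (setpow G (augI t N) (p ^ n)) (grpalg G)"
      using claim1[OF assms(5) x, of "p ^ n - 1"] by (simp only: e[symmetric])
  next
    fix x y assume x: "x \<in> setmul G (augI t N) (grpalg G)" and y: "y \<in> setmul G (augI t N) (grpalg G)"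
      and xy: "x - y \<in> setmul G (augI t N) (augI t (carrier G))"
    show "gapow G x (p ^ n) - gapow G y (p ^ n) \<in> Jideal G N t (p ^ n)"
      using claim2[OF assms(5) x y xy, of "p ^ n - 1"] by (simp only: e[symmetric])
  qed
qed

end
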